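(* Let $\mathcal H$ be the set of pairs $(g,h)$ of Markov policies $g,h:\mathcal X\to\{0,1\}$ such that $N^{(g)}(x)\ge N^{(h)}(x)$ for all $x\in\mathcal X$. Each of the following conditions is sufficient for the RB to be indexable: (a) for every $(g,h)\in\mathcal H$ and every $x,z\in\mathcal X$, \[\sum_{y\in\mathcal X}\Big\{[\beta P_{zy}(1)-P_{xy}(1)]^+N^{(g)}(y)-[P_{xy}(1)-\beta P_{zy}(1)]^+N^{(h)}(y)\Big\}\le\frac{(1-\beta)^2}{\beta};\] (b) for every $(g,h)\in\mathcal H$ and every $x\in\mathcal X$, \[\sum_{y\in\mathcal X}\Big\{[P_{xy}(0)-P_{xy}(1)]^+N^{(g)}(y)-[P_{xy}(1)-P_{xy}(0)]^+N^{(h)}(y)\Big\}\le\frac{1-\beta}{\beta}.\]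
   Context: A restless bandit (RB) consists of a finite or countable state space $\mathcal X$, actions $\{0,1\}$ (0 = passive, 1 = active), transition matrices $P(0),P(1)$ on $\mathcal X$, and a cost function $c:\mathcal X\times\{0,1\}\to\mathbb R$; $\beta\in(0,1)$ is a discount factor. $[u]^+=\max\{u,0\}$. For $\lambda\in\mathbb R$ let $c_\lambda(x,a)=c(x,a)+\lambda a$. For a Markov policy $g:\mathcal X\to\{0,1\}$ (with $X_{t+1}$ drawn from $P_{X_t\,\cdot}(g(X_t))$) let $N^{(g)}(x)=(1-\beta)\mathbb E[\sum_{t\ge0}\beta^t g(X_t)\mid X_0=x]$. Let $V_\lambda$ be the unique fixed point of $V_\lambda(x)=\min\{H_\lambda(x,0),H_\lambda(x,1)\}$, $H_\lambda(x,a)=(1-\beta)c_\lambda(x,a)+\beta\sum_y P_{xy}(a)V_\lambda(y)$, and $g_\lambda(x)=0$ if $H_\lambda(x,0)<H_\lambda(x,1)$, $g_\lambda(x)=1$ otherwise. The passive set is $\Pi_\lambda=\{x: g_\lambda(x)=0\}$. The RB is indexable if $\lambda'\le\lambda''$ implies $\Pi_{\lambda'}\subseteq\Pi_{\lambda''}$. *)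

theory Defs
  imports "HOL-Probability.Probability"
begin

text \<open>Actions are encoded as bool (False = passive = 0, True = active = 1).
  The transition kernel is P :: bool => 'x => 'x pmf, so that the matrix entry P_{xy}(a)
  is pmf (P a x) y (rows are automatically probability distributions).\<close>

fun state_dist :: "(bool \<Rightarrow> 'x \<Rightarrow> 'x pmf) \<Rightarrow> ('x \<Rightarrow> bool) \<Rightarrow> nat \<Rightarrow> 'x \<Rightarrow> 'x pmf" where
  "state_dist P g 0 x = return_pmf x"
| "state_dist P g (Suc t) x = bind_pmf (state_dist P g t x) (\<lambda>z. P (g z) z)"

definition occ :: "real \<Rightarrow> (bool \<Rightarrow> 'x \<Rightarrow> 'x pmf) \<Rightarrow> ('x \<Rightarrow> bool) \<Rightarrow> 'x \<Rightarrow> real" where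
  "occ \<beta> P g x = (1 - \<beta>) *
     (\<Sum>t. \<beta> ^ t * measure_pmf.expectation (state_dist P g t x) (\<lambda>y. of_bool (g y)))"

definition clam :: "('x \<Rightarrow> bool \<Rightarrow> real) \<Rightarrow> real \<Rightarrow> 'x \<Rightarrow> bool \<Rightarrow> real" where
  "clam c lam x a = c x a + lam * of_bool a"

definition Hq :: "real \<Rightarrow> (bool \<Rightarrow> 'x \<Rightarrow> 'x pmf) \<Rightarrow> ('x \<Rightarrow> bool \<Rightarrow> real) \<Rightarrow> real
                  \<Rightarrow> ('x \<Rightarrow> real) \<Rightarrow> 'x \<Rightarrow> bool \<Rightarrow> real" where
  "Hq \<beta> P c lam V x a = (1 - \<beta>) * clam c lam x a + \<beta> * infsum (\<lambda>y. pmf (P a x) y * V y) UNIV"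

definition Vlam :: "real \<Rightarrow> (bool \<Rightarrow> 'x \<Rightarrow> 'x pmf) \<Rightarrow> ('x \<Rightarrow> bool \<Rightarrow> real) \<Rightarrow> real \<Rightarrow> 'x \<Rightarrow> real" where
  "Vlam \<beta> P c lam = (THE V. bounded (range V) \<and>
      (\<forall>x. V x = min (Hq \<beta> P c lam V x False) (Hq \<beta> P c lam V x True)))"

definition passive_set :: "real \<Rightarrow> (bool \<Rightarrow> 'x \<Rightarrow> 'x pmf) \<Rightarrow> ('x \<Rightarrow> bool \<Rightarrow> real) \<Rightarrow> real \<Rightarrow> 'x set" where
  "passive_set \<beta> P c lam =
     {x. Hq \<beta> P c lam (Vlam \<beta> P c lam) x False < Hq \<beta> P c lam (Vlam \<beta> P c lam) x True}"

definition indexable :: "real \<Rightarrow> (bool \<Rightarrow> 'x \<Rightarrow> 'x pmf) \<Rightarrow> ('x \<Rightarrow> bool \<Rightarrow> real) \<Rightarrow> bool" where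
  "indexable \<beta> P c \<longleftrightarrow>
     (\<forall>l1 l2. l1 \<le> l2 \<longrightarrow> passive_set \<beta> P c l1 \<subseteq> passive_set \<beta> P c l2)"

definition pos_part :: "real \<Rightarrow> real" where
  "pos_part u = max u 0"

end

theory Submission
  imports Defs
begin

lemma pmf_summ: "pmf p summable_on A"
proof -
  have "Infinite_Sum.abs_summable_on (pmf p) A"
    using abs_summable_equivalent pmf_abs_summable by blast
  then show ?thesis by (rule abs_summable_summable)
qed

lemma pmf_infsum1: "infsum (pmf p) UNIV = 1"
proof -
  have "Infinite_Sum.abs_summable_on (pmf p) UNIV"
    using abs_summable_equivalent pmf_abs_summable by blast
  then have "infsetsum (pmf p) UNIV = infsum (pmf p) UNIV"
    by (intro infsetsum_infsum) (simp add: pmf_abs_summable)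
  then show ?thesis using infsetsum_pmf_eq_1[of p UNIV] by simp
qed

lemma abs_summ_bdd:
  fixes f :: "'x \<Rightarrow> real"
  assumes "\<And>y. \<bar>f y\<bar> \<le> B"
  shows "Infinite_Sum.abs_summable_on (\<lambda>y. pmf p y * f y) A"
proof -
  have "Infinite_Sum.abs_summable_on (\<lambda>y. pmf p y * B) A"
    by (metis pmf_summ summable_on_iff_abs_summable_on_real summable_on_cmult_left)
  then show ?thesis
    by (rule Infinite_Sum.abs_summable_on_comparison_test)
      (use assms in \<open>auto simp: abs_mult intro!: mult_left_mono intro: order_trans[OF _ abs_ge_self]\<close>)
qed

lemma summ_bdd:
  fixes f :: "'x \<Rightarrow> real"
  assumes "\<And>y. \<bar>f y\<bar> \<le> B"
  shows "(\<lambda>y. pmf p y * f y) summable_on A"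
  using abs_summable_summable[OF abs_summ_bdd[OF assms]] .

lemma summ_dom:
  fixes f g :: "'x \<Rightarrow> real"
  assumes "g summable_on A" "\<And>y. \<bar>f y\<bar> \<le> g y"
  shows "f summable_on A"
proof -
  have "Infinite_Sum.abs_summable_on g A"
    using assms(1) summable_on_iff_abs_summable_on_real by blast
  then have "Infinite_Sum.abs_summable_on f A"
    by (rule Infinite_Sum.abs_summable_on_comparison_test)
      (use assms(2) in \<open>auto intro: order_trans[OF _ abs_ge_self]\<close>)
  then show ?thesis by (rule abs_summable_summable)
qed

lemma infsum_diff':
  fixes f g :: "'x \<Rightarrow> real"
  assumes "f summable_on A" "g summable_on A"
  shows "infsum (\<lambda>x. f x - g x) A = infsum f A - infsum g A"
  using infsum_add[of f A "\<lambda>x. - g x"] summable_on_uminus[of g A] infsum_uminus[of g A] assms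
  by simp

definition Ex :: "'x pmf \<Rightarrow> ('x \<Rightarrow> real) \<Rightarrow> real" where
  "Ex p f = infsum (\<lambda>y. pmf p y * f y) UNIV"

definition bnd :: "('x \<Rightarrow> real) \<Rightarrow> bool" where
  "bnd f \<longleftrightarrow> (\<exists>B. \<forall>y. \<bar>f y\<bar> \<le> B)"

lemma bndE: "bnd f \<Longrightarrow> (\<And>B. (\<And>y. \<bar>f y\<bar> \<le> B) \<Longrightarrow> thesis) \<Longrightarrow> thesis"
  unfolding bnd_def by blast

lemma bndI: "(\<And>y. \<bar>f y\<bar> \<le> B) \<Longrightarrow> bnd f"
  unfolding bnd_def by blast

lemma bnd_iff: "bnd f \<longleftrightarrow> bounded (range f)"
  unfolding bnd_def bounded_iff by auto

lemma bnd_summ: "bnd f \<Longrightarrow> (\<lambda>y. pmf p y * f y) summable_on A"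
  by (auto elim!: bndE intro: summ_bdd)

lemma bnd_add: assumes "bnd f" "bnd g" shows "bnd (\<lambda>y. f y + g y)"
proof -
  obtain B1 B2 where b: "\<And>y. \<bar>f y\<bar> \<le> B1" "\<And>y. \<bar>g y\<bar> \<le> B2"
    using assms by (meson bndE)
  show ?thesis
  proof (rule bndI[of _ "B1 + B2"])
    fix y show "\<bar>f y + g y\<bar> \<le> B1 + B2" using b[of y] abs_triangle_ineq[of "f y" "g y"] by linarith
  qed
qed

lemma bnd_diff: assumes "bnd f" "bnd g" shows "bnd (\<lambda>y. f y - g y)"
proof -
  obtain B1 B2 where b: "\<And>y. \<bar>f y\<bar> \<le> B1" "\<And>y. \<bar>g y\<bar> \<le> B2"
    using assms by (meson bndE)
  show ?thesis
  proof (rule bndI[of _ "B1 + B2"])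
    fix y show "\<bar>f y - g y\<bar> \<le> B1 + B2" using b[of y] abs_triangle_ineq4[of "f y" "g y"] by linarith
  qed
qed

lemma bnd_cmult: assumes "bnd f" shows "bnd (\<lambda>y. a * f y)"
proof -
  obtain B where b: "\<And>y. \<bar>f y\<bar> \<le> B" using assms by (meson bndE)
  show ?thesis
  proof (rule bndI[of _ "\<bar>a\<bar> * B"])
    fix y show "\<bar>a * f y\<bar> \<le> \<bar>a\<bar> * B" using b[of y] by (simp add: abs_mult mult_left_mono)
  qed
qed

lemma bnd_const: "bnd (\<lambda>y. a)"
  by (rule bndI[of _ "\<bar>a\<bar>"]) simp

lemma Ex_add: "bnd f \<Longrightarrow> bnd g \<Longrightarrow> Ex p (\<lambda>y. f y + g y) = Ex p f + Ex p g"
  unfolding Ex_def by (simp add: distrib_left infsum_add bnd_summ)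

lemma Ex_diff: "bnd f \<Longrightarrow> bnd g \<Longrightarrow> Ex p (\<lambda>y. f y - g y) = Ex p f - Ex p g"
  unfolding Ex_def by (simp add: right_diff_distrib infsum_diff' bnd_summ)

lemma Ex_cmult: "Ex p (\<lambda>y. a * f y) = a * Ex p f"
  unfolding Ex_def by (simp add: mult.left_commute infsum_cmult_right')

lemma Ex_const: "Ex p (\<lambda>y. a) = a"
  unfolding Ex_def using pmf_infsum1[of p] by (simp add: infsum_cmult_left')

lemma Ex_mono: "bnd f \<Longrightarrow> bnd g \<Longrightarrow> (\<And>y. f y \<le> g y) \<Longrightarrow> Ex p f \<le> Ex p g"
  unfolding Ex_def by (intro infsum_mono bnd_summ) (auto intro: mult_left_mono)

lemma Ex_le_const: "bnd f \<Longrightarrow> (\<And>y. f y \<le> a) \<Longrightarrow> Ex p f \<le> a"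
  using Ex_mono[of f "\<lambda>_. a" p] Ex_const[of p a] bnd_const[of a] by metis

lemma Ex_ge_const: "bnd f \<Longrightarrow> (\<And>y. a \<le> f y) \<Longrightarrow> a \<le> Ex p f"
  using Ex_mono[of "\<lambda>_. a" f p] Ex_const[of p a] bnd_const[of a] by metis

lemma Ex_abs: assumes "\<And>y. \<bar>f y\<bar> \<le> B" shows "\<bar>Ex p f\<bar> \<le> B"
proof -
  have b: "bnd f" using assms by (rule bndI)
  have "Ex p f \<le> B" by (rule Ex_le_const[OF b]) (use assms in \<open>auto simp: abs_le_iff\<close>)
  moreover have "- B \<le> Ex p f" by (rule Ex_ge_const[OF b]) (smt (verit) assms)
  ultimately show ?thesis by linarith
qed

lemma Eint: assumes "bnd f" shows "measure_pmf.expectation p f = Ex p f"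
proof -
  obtain B where b: "\<And>y. \<bar>f y\<bar> \<le> B" using assms by (meson bndE)
  have "Infinite_Sum.abs_summable_on (\<lambda>y. pmf p y * f y) UNIV"
    using b by (rule abs_summ_bdd)
  then have "Infinite_Set_Sum.abs_summable_on (\<lambda>y. pmf p y * f y) UNIV"
    using abs_summable_equivalent by blast
  then show ?thesis
    unfolding pmf_expectation_eq_infsetsum Ex_def by (rule infsetsum_infsum)
qed

lemma int_bind:
  fixes f :: "'b \<Rightarrow> real"
  assumes "\<And>y. \<bar>f y\<bar> \<le> B"
  shows "measure_pmf.expectation (bind_pmf p K) f
       = measure_pmf.expectation p (\<lambda>y. measure_pmf.expectation (K y) f)"
  unfolding measure_pmf_bind
  by (rule integral_bind[where K="count_space UNIV" and B=B and B'=1])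
     (auto simp: assms measure_pmf.finite_measure measure_pmf_in_subprob_algebra)

lemma geo_zero:
  fixes a C q :: real
  assumes "\<And>n. a \<le> C * q^n" "0 \<le> q" "q < 1"
  shows "a \<le> 0"
proof -
  have "(\<lambda>n. C * q^n) \<longlonglongrightarrow> 0"
    using assms by (intro tendsto_mult_right_zero LIMSEQ_power_zero) auto
  then show ?thesis by (rule LIMSEQ_le_const) (use assms in auto)
qed

locale rb =
  fixes \<beta> :: real and P :: "bool \<Rightarrow> 'x \<Rightarrow> 'x pmf" and c :: "'x \<Rightarrow> bool \<Rightarrow> real"
  assumes b0: "0 < \<beta>" and b1: "\<beta> < 1" and cbd: "bounded (range (\<lambda>(x, a). c x a))"
begin

definition Cc where "Cc = (SOME B. \<forall>x a. \<bar>c x a\<bar> \<le> B)"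

lemma Cc: "\<bar>c x a\<bar> \<le> Cc"
proof -
  have "\<exists>B. \<forall>x a. \<bar>c x a\<bar> \<le> B"
  proof -
    obtain B where "\<forall>z\<in>range (\<lambda>(x, a). c x a). norm z \<le> B" using cbd bounded_iff by metis
    then show ?thesis by auto
  qed
  from someI_ex[OF this] show ?thesis unfolding Cc_def by blast
qed

lemma Hq_eq: "Hq \<beta> P c lam V x a = (1-\<beta>) * clam c lam x a + \<beta> * Ex (P a x) V"
  by (simp add: Hq_def Ex_def)

lemma clam_bd: "\<bar>clam c lam x a\<bar> \<le> Cc + \<bar>lam\<bar>"
  unfolding clam_def using Cc[of x a] by (cases a) auto

definition T where "T lam V x = min (Hq \<beta> P c lam V x False) (Hq \<beta> P c lam V x True)"

lemma Hq_lip: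
  assumes "bnd V" "bnd W" "\<And>y. \<bar>V y - W y\<bar> \<le> B"
  shows "\<bar>Hq \<beta> P c lam V x a - Hq \<beta> P c lam W x a\<bar> \<le> \<beta> * B"
proof -
  have "Hq \<beta> P c lam V x a - Hq \<beta> P c lam W x a = \<beta> * Ex (P a x) (\<lambda>y. V y - W y)"
    by (simp add: Hq_eq Ex_diff assms algebra_simps)
  moreover have "\<bar>Ex (P a x) (\<lambda>y. V y - W y)\<bar> \<le> B" using assms(3) by (rule Ex_abs)
  ultimately show ?thesis using b0 by (simp add: abs_mult mult_left_mono)
qed

lemma T_lip:
  assumes "bnd V" "bnd W" "\<And>y. \<bar>V y - W y\<bar> \<le> B"
  shows "\<bar>T lam V x - T lam W x\<bar> \<le> \<beta> * B"
  using Hq_lip[OF assms, of lam x False] Hq_lip[OF assms, of lam x True]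
  unfolding T_def min_def abs_le_iff by auto

lemma Hq_bd:
  assumes "\<And>y. \<bar>V y\<bar> \<le> B"
  shows "\<bar>Hq \<beta> P c lam V x a\<bar> \<le> (1-\<beta>)*(Cc+\<bar>lam\<bar>) + \<beta>*B"
proof -
  have e: "\<bar>Ex (P a x) V\<bar> \<le> B" using assms by (rule Ex_abs)
  have "\<bar>(1-\<beta>) * clam c lam x a\<bar> \<le> (1-\<beta>)*(Cc+\<bar>lam\<bar>)"
    using b1 clam_bd[of lam x a] by (simp add: abs_mult mult_left_mono)
  moreover have "\<bar>\<beta> * Ex (P a x) V\<bar> \<le> \<beta>*B"
    using b0 e by (simp add: abs_mult mult_left_mono)
  ultimately show ?thesis unfolding Hq_eq
    using abs_triangle_ineq[of "(1-\<beta>) * clam c lam x a" "\<beta> * Ex (P a x) V"] by linarith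
qed

lemma T_bd:
  assumes "\<And>y. \<bar>V y\<bar> \<le> B"
  shows "\<bar>T lam V x\<bar> \<le> (1-\<beta>)*(Cc+\<bar>lam\<bar>) + \<beta>*B"
  using Hq_bd[OF assms, where lam=lam and x=x and a=False] Hq_bd[OF assms, where lam=lam and x=x and a=True]
  unfolding T_def min_def abs_le_iff by auto

lemma fix_ex: "\<exists>V. bnd V \<and> (\<forall>x. V x = T lam V x)"
proof -
  define K where "K = Cc + \<bar>lam\<bar>"
  have K0: "0 \<le> K" using Cc[of undefined undefined] unfolding K_def by linarith
  define Vn where "Vn n = (T lam ^^ n) (\<lambda>_. 0)" for n
  have Vn_Suc: "Vn (Suc n) = T lam (Vn n)" for n by (simp add: Vn_def)
  have vb: "\<bar>Vn n x\<bar> \<le> K" for n x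
  proof (induction n arbitrary: x)
    case 0 then show ?case using K0 by (simp add: Vn_def)
  next
    case (Suc n)
    have "\<bar>T lam (Vn n) x\<bar> \<le> (1-\<beta>)*K + \<beta>*K" using T_bd[of "Vn n" K lam x] Suc unfolding K_def by blast
    then show ?case by (simp add: Vn_Suc algebra_simps)
  qed
  have vbnd: "bnd (Vn n)" for n using vb by (blast intro: bndI)
  have vd: "\<bar>Vn (Suc n) x - Vn n x\<bar> \<le> \<beta>^n * K" for n x
  proof (induction n arbitrary: x)
    case 0 then show ?case using vb[of 1 x] by (simp add: Vn_def)
  next
    case (Suc n)
    have "\<bar>T lam (Vn (Suc n)) x - T lam (Vn n) x\<bar> \<le> \<beta> * (\<beta>^n*K)"
      by (rule T_lip[OF vbnd vbnd Suc.IH])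
    moreover have "Vn (Suc (Suc n)) x - Vn (Suc n) x = T lam (Vn (Suc n)) x - T lam (Vn n) x"
      by (simp only: Vn_Suc)
    ultimately show ?case by (simp add: mult.assoc)
  qed
  have vc: "\<bar>Vn (n+j) x - Vn n x\<bar> \<le> K * \<beta>^n * (1 - \<beta>^j) / (1-\<beta>)" for n j x
  proof (induction j)
    case 0 show ?case by simp
  next
    case (Suc j)
    have "\<bar>Vn (n + Suc j) x - Vn n x\<bar> \<le> \<bar>Vn (Suc (n+j)) x - Vn (n+j) x\<bar> + \<bar>Vn (n+j) x - Vn n x\<bar>"
      using abs_triangle_ineq[of "Vn (Suc (n+j)) x - Vn (n+j) x" "Vn (n+j) x - Vn n x"] by simp
    also have "\<dots> \<le> \<beta>^(n+j)*K + K * \<beta>^n * (1 - \<beta>^j) / (1-\<beta>)"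
      using vd Suc.IH by (intro add_mono) auto
    also have "\<dots> = K * \<beta>^n * (1 - \<beta>^Suc j) / (1-\<beta>)"
      using b1 by (simp add: field_simps power_add)
    finally show ?case .
  qed
  have vc': "\<bar>Vn m x - Vn n x\<bar> \<le> K * \<beta>^n / (1-\<beta>)" if "n \<le> m" for m n x
  proof -
    obtain j where m: "m = n + j" using \<open>n \<le> m\<close> le_Suc_ex by blast
    have "K * \<beta>^n * (1 - \<beta>^j) / (1-\<beta>) \<le> K * \<beta>^n / (1-\<beta>)"
      using b0 b1 K0 by (intro divide_right_mono mult_left_le) auto
    then show ?thesis using vc[of n j x] unfolding m by linarith
  qed
  have lim0: "(\<lambda>n. K * \<beta>^n / (1-\<beta>)) \<longlonglongrightarrow> 0"
    using b0 b1 by (intro tendsto_divide_zero tendsto_mult_right_zero LIMSEQ_power_zero) auto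
  have conv: "convergent (\<lambda>n. Vn n x)" for x
  proof (rule Cauchy_convergent, rule metric_CauchyI)
    fix e :: real assume e: "0 < e"
    have "eventually (\<lambda>n. K * \<beta>^n / (1-\<beta>) < e/2) sequentially"
      using lim0 e by (intro order_tendstoD(2)) auto
    then obtain M where M: "K * \<beta>^M / (1-\<beta>) < e/2" by (auto simp: eventually_sequentially)
    show "\<exists>M. \<forall>m\<ge>M. \<forall>n\<ge>M. dist (Vn m x) (Vn n x) < e"
    proof (intro exI allI impI)
      fix m n assume "M \<le> m" "M \<le> n"
      then have "\<bar>Vn m x - Vn M x\<bar> \<le> K * \<beta>^M / (1-\<beta>)" "\<bar>Vn n x - Vn M x\<bar> \<le> K * \<beta>^M / (1-\<beta>)"
        using vc' by auto
      then show "dist (Vn m x) (Vn n x) < e" using M unfolding dist_real_def by linarith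
    qed
  qed
  define V where "V x = lim (\<lambda>n. Vn n x)" for x
  have lim: "(\<lambda>n. Vn n x) \<longlonglongrightarrow> V x" for x using conv[of x] by (simp add: V_def convergent_LIMSEQ_iff)
  have vV: "\<bar>V x - Vn n x\<bar> \<le> K * \<beta>^n / (1-\<beta>)" for n x
  proof (rule LIMSEQ_le_const2)
    show "(\<lambda>m. \<bar>Vn m x - Vn n x\<bar>) \<longlonglongrightarrow> \<bar>V x - Vn n x\<bar>"
      by (intro tendsto_rabs tendsto_diff lim tendsto_const)
    show "\<exists>N. \<forall>m\<ge>N. \<bar>Vn m x - Vn n x\<bar> \<le> K * \<beta>^n / (1-\<beta>)" using vc' by blast
  qed
  have Vb: "\<bar>V x\<bar> \<le> K" for x
  proof (rule LIMSEQ_le_const2)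
    show "(\<lambda>m. \<bar>Vn m x\<bar>) \<longlonglongrightarrow> \<bar>V x\<bar>" by (intro tendsto_rabs lim)
    show "\<exists>N. \<forall>m\<ge>N. \<bar>Vn m x\<bar> \<le> K" using vb by blast
  qed
  have bV: "bnd V" using Vb by (blast intro: bndI)
  have TV: "\<bar>T lam V x - V x\<bar> \<le> (2*K/(1-\<beta>)*\<beta>) * \<beta>^n" for x n
  proof -
    have a: "\<bar>T lam V x - T lam (Vn n) x\<bar> \<le> \<beta>*(K*\<beta>^n/(1-\<beta>))" by (rule T_lip[OF bV vbnd vV])
    have b: "\<bar>Vn (Suc n) x - V x\<bar> \<le> K*\<beta>^(Suc n)/(1-\<beta>)" using vV[of x "Suc n"] by (simp add: abs_minus_commute)
    have e: "T lam (Vn n) x = Vn (Suc n) x" by (simp add: Vn_Suc)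
    have "\<bar>T lam V x - V x\<bar> \<le> \<bar>T lam V x - T lam (Vn n) x\<bar> + \<bar>Vn (Suc n) x - V x\<bar>"
      using abs_triangle_ineq[of "T lam V x - T lam (Vn n) x" "Vn (Suc n) x - V x"] e by simp
    also have "\<dots> \<le> \<beta>*(K*\<beta>^n/(1-\<beta>)) + K*\<beta>^(Suc n)/(1-\<beta>)" using a b by linarith
    also have "\<dots> = 2 * (K*\<beta>^(Suc n)/(1-\<beta>))" by (simp add: mult_ac)
    also have "\<dots> = (2*K/(1-\<beta>)*\<beta>) * \<beta>^n" by (simp add: mult_ac)
    finally show ?thesis .
  qed
  have "\<bar>T lam V x - V x\<bar> \<le> 0" for x
    by (rule geo_zero[of _ "2*K/(1-\<beta>)*\<beta>" \<beta>, OF TV]) (use b0 b1 in auto)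
  then have "\<forall>x. V x = T lam V x" by force
  with bV show ?thesis by blast
qed

lemma fix_uniq:
  assumes "bnd V" "bnd W" "\<forall>x. V x = T lam V x" "\<forall>x. W x = T lam W x"
  shows "V = W"
proof -
  obtain B1 B2 where b: "\<And>y. \<bar>V y\<bar> \<le> B1" "\<And>y. \<bar>W y\<bar> \<le> B2"
    using assms by (meson bndE)
  have VW: "\<bar>V x - W x\<bar> \<le> (B1 + B2) * \<beta>^n" for n x
  proof (induction n arbitrary: x)
    case 0 show ?case using b[of x] by simp
  next
    case (Suc n)
    have "\<bar>T lam V x - T lam W x\<bar> \<le> \<beta> * ((B1 + B2) * \<beta>^n)"
      by (rule T_lip[OF assms(1,2) Suc.IH])
    then show ?case using assms(3,4) by (metis mult.commute mult.left_commute power_Suc)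
  qed
  have "\<bar>V x - W x\<bar> \<le> 0" for x
    by (rule geo_zero[of _ "B1 + B2" \<beta>, OF VW]) (use b0 b1 in auto)
  then show ?thesis by force
qed

lemma Vl: "bnd (Vlam \<beta> P c lam) \<and> (\<forall>x. Vlam \<beta> P c lam x = T lam (Vlam \<beta> P c lam) x)"
proof -
  obtain V where V: "bnd V" "\<forall>x. V x = T lam V x" using fix_ex by blast
  have ex1: "\<exists>!V. bounded (range V) \<and> (\<forall>x. V x = min (Hq \<beta> P c lam V x False) (Hq \<beta> P c lam V x True))"
  proof (rule ex1I[of _ V])
    show "bounded (range V) \<and> (\<forall>x. V x = min (Hq \<beta> P c lam V x False) (Hq \<beta> P c lam V x True))"
      using V unfolding bnd_iff T_def by blast
    fix W assume "bounded (range W) \<and> (\<forall>x. W x = min (Hq \<beta> P c lam W x False) (Hq \<beta> P c lam W x True))"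
    then have "bnd W" "\<forall>x. W x = T lam W x" unfolding bnd_iff T_def by blast+
    then show "W = V" using fix_uniq V by blast
  qed
  show ?thesis using theI'[OF ex1] unfolding Vlam_def[symmetric] bnd_iff T_def by blast
qed

end

context rb begin

lemma sd_Suc': "state_dist P g (Suc t) x = bind_pmf (P (g x) x) (\<lambda>y. state_dist P g t y)"
proof (induction t)
  case 0 show ?case by (simp add: bind_return_pmf bind_return_pmf')
next
  case (Suc t)
  have "state_dist P g (Suc (Suc t)) x = bind_pmf (state_dist P g (Suc t) x) (\<lambda>z. P (g z) z)" by simp
  also have "\<dots> = bind_pmf (P (g x) x) (\<lambda>y. state_dist P g (Suc t) y)"
    unfolding Suc by (simp add: bind_assoc_pmf)
  finally show ?case .
qed

definition ee where "ee g t y = measure_pmf.expectation (state_dist P g t y) (\<lambda>z. of_bool (g z) :: real)"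

lemma ee_bd: "0 \<le> ee g t y \<and> ee g t y \<le> 1"
proof -
  have b: "bnd (\<lambda>z. of_bool (g z) :: real)" by (rule bndI[of _ 1]) simp
  have "ee g t y = Ex (state_dist P g t y) (\<lambda>z. of_bool (g z))" unfolding ee_def by (rule Eint[OF b])
  moreover have "Ex (state_dist P g t y) (\<lambda>z. of_bool (g z)) \<le> 1" by (rule Ex_le_const[OF b]) simp
  moreover have "0 \<le> Ex (state_dist P g t y) (\<lambda>z. of_bool (g z))" by (rule Ex_ge_const[OF b]) simp
  ultimately show ?thesis by simp
qed

lemma ee0: "ee g 0 x = of_bool (g x)" by (simp add: ee_def)

lemma eeSuc: "ee g (Suc t) x = measure_pmf.expectation (P (g x) x) (\<lambda>y. ee g t y)"
  unfolding ee_def sd_Suc' by (rule int_bind[where B=1]) simp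

lemma ee_int: "integrable (measure_pmf p) (\<lambda>y. \<beta>^i * ee g i y)"
proof (rule measure_pmf.integrable_const_bound[where B=1])
  show "AE y in measure_pmf p. norm (\<beta>^i * ee g i y) \<le> 1"
    using ee_bd[of g i] b0 b1 by (auto simp: abs_mult intro!: mult_le_one power_le_one)
qed simp

lemma summ_ee: "summable (\<lambda>t. \<beta>^t * ee g (t + k) y)"
  by (rule summable_comparison_test'[where g="\<lambda>t. \<beta>^t" and N=0])
     (use ee_bd[of g] b0 b1 in \<open>auto simp: abs_mult intro!: mult_left_le summable_geometric\<close>)

definition SS where "SS g y = (\<Sum>t. \<beta>^t * ee g t y)"

lemma occ_SS: "occ \<beta> P g x = (1-\<beta>) * SS g x"
  by (simp add: occ_def SS_def ee_def)

lemma SS_bd: "0 \<le> SS g y \<and> SS g y \<le> 1/(1-\<beta>)"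
proof
  have s: "summable (\<lambda>t. \<beta>^t * ee g t y)" using summ_ee[of g 0 y] by simp
  show "0 \<le> SS g y" unfolding SS_def
    by (rule suminf_nonneg[OF s]) (use ee_bd b0 in auto)
  have "SS g y \<le> (\<Sum>t. \<beta>^t)" unfolding SS_def
    by (rule suminf_le[OF _ s]) (use ee_bd[of g] b0 b1 in \<open>auto intro: mult_left_le summable_geometric\<close>)
  also have "\<dots> = 1/(1-\<beta>)" using b0 b1 by (intro suminf_geometric) auto
  finally show "SS g y \<le> 1/(1-\<beta>)" .
qed

lemma SS_rec: "SS g x = of_bool (g x) + \<beta> * measure_pmf.expectation (P (g x) x) (SS g)"
proof -
  let ?p = "P (g x) x"
  have s: "summable (\<lambda>t. \<beta>^t * ee g t x)" using summ_ee[of g 0 x] by simp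
  have s1: "summable (\<lambda>t. \<beta>^t * ee g (Suc t) x)" using summ_ee[of g 1 x] by simp
  have "SS g x = (\<Sum>t. \<beta>^(Suc t) * ee g (Suc t) x) + \<beta>^0 * ee g 0 x"
    unfolding SS_def using suminf_split_head[OF s] by simp
  also have "(\<Sum>t. \<beta>^(Suc t) * ee g (Suc t) x) = \<beta> * (\<Sum>t. \<beta>^t * ee g (Suc t) x)"
    using suminf_mult[OF s1, of \<beta>] by (simp add: mult.assoc)
  also have "(\<Sum>t. \<beta>^t * ee g (Suc t) x) = (\<Sum>t. measure_pmf.expectation ?p (\<lambda>y. \<beta>^t * ee g t y))"
    by (simp add: eeSuc)
  also have "\<dots> = measure_pmf.expectation ?p (\<lambda>y. \<Sum>t. \<beta>^t * ee g t y)"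
  proof (rule integral_suminf[where M="measure_pmf ?p" and f="\<lambda>i y. \<beta>^i * ee g i y", symmetric])
    have pw1: "\<beta>^i \<le> 1" for i :: nat by (rule power_le_one) (use b0 b1 in auto)
    have pw0: "0 \<le> \<beta>^i" for i :: nat using b0 by simp
    have nm: "norm (\<beta>^i * ee g i y) = \<beta>^i * ee g i y" for i y
      using ee_bd[of g i y] pw0[of i] by (simp add: abs_mult)
    show "integrable (measure_pmf ?p) (\<lambda>y. \<beta>^i * ee g i y)" for i by (rule ee_int)
    have sy: "summable (\<lambda>i. norm (\<beta>^i * ee g i y))" for y
      unfolding nm using summ_ee[of g 0 y] by simp
    show "AE y in measure_pmf ?p. summable (\<lambda>i. norm (\<beta>^i * ee g i y))"
      by (rule AE_I2) (rule sy)
    have nb: "norm (measure_pmf.expectation ?p (\<lambda>y. norm (\<beta>^i * ee g i y))) \<le> \<beta>^i" for i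
    proof -
      have le1: "\<beta>^i * ee g i y \<le> \<beta>^i" for y
        using ee_bd[of g i y] pw0[of i] by (intro mult_left_le) auto
      have ge0: "0 \<le> \<beta>^i * ee g i y" for y
        using ee_bd[of g i y] pw0[of i] by simp
      have bb: "bnd (\<lambda>y. \<beta>^i * ee g i y)"
      proof (rule bndI[of _ 1])
        fix y show "\<bar>\<beta>^i * ee g i y\<bar> \<le> 1" using le1[of y] ge0[of y] pw1[of i] by simp
      qed
      have "measure_pmf.expectation ?p (\<lambda>y. \<beta>^i * ee g i y) = Ex ?p (\<lambda>y. \<beta>^i * ee g i y)"
        by (rule Eint[OF bb])
      moreover have "Ex ?p (\<lambda>y. \<beta>^i * ee g i y) \<le> \<beta>^i"
        by (rule Ex_le_const[OF bb le1])
      moreover have "0 \<le> Ex ?p (\<lambda>y. \<beta>^i * ee g i y)"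
        by (rule Ex_ge_const[OF bb ge0])
      ultimately show ?thesis unfolding nm by simp
    qed
    have sg: "summable (\<lambda>i. \<beta>^i)" using b0 b1 by (intro summable_geometric) simp
    show "summable (\<lambda>i. measure_pmf.expectation ?p (\<lambda>y. norm (\<beta>^i * ee g i y)))"
      by (rule summable_comparison_test'[OF sg]) (rule nb)
  qed
  finally show ?thesis by (simp add: ee0 SS_def[abs_def])
qed

lemma occ_bd: "0 \<le> occ \<beta> P g x \<and> occ \<beta> P g x \<le> 1"
proof
  show "0 \<le> occ \<beta> P g x" unfolding occ_SS using SS_bd[of g x] b1 by simp
  have "(1-\<beta>) * SS g x \<le> (1-\<beta>) * (1/(1-\<beta>))"
    by (rule mult_left_mono) (use SS_bd b1 in auto)
  then show "occ \<beta> P g x \<le> 1" unfolding occ_SS using b1 by simp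
qed

lemma occ_bnd: "bnd (occ \<beta> P g)"
  by (rule bndI[of _ 1]) (use occ_bd in auto)

lemma occ_rec: "occ \<beta> P g x = (1-\<beta>) * of_bool (g x) + \<beta> * Ex (P (g x) x) (occ \<beta> P g)"
proof -
  have bS: "bnd (SS g)" by (rule bndI[of _ "1/(1-\<beta>)"]) (use SS_bd in auto)
  have "occ \<beta> P g x = (1-\<beta>) * of_bool (g x) + \<beta> * ((1-\<beta>) * measure_pmf.expectation (P (g x) x) (SS g))"
    unfolding occ_SS by (subst SS_rec) (simp add: algebra_simps)
  also have "(1-\<beta>) * measure_pmf.expectation (P (g x) x) (SS g) = Ex (P (g x) x) (occ \<beta> P g)"
    by (simp add: Eint[OF bS] occ_SS[abs_def] Ex_cmult)
  finally show ?thesis .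
qed

end

lemma su2: "(\<lambda>y. \<bar>a * pmf p y\<bar> + \<bar>pmf q y\<bar>) summable_on A"
proof -
  have "(\<lambda>y. \<bar>a\<bar> * pmf p y + pmf q y) summable_on A"
    by (intro summable_on_add summable_on_cmult_right pmf_summ)
  then show ?thesis by (simp add: abs_mult)
qed

lemma su1: "(\<lambda>y. \<bar>pmf p y\<bar> + \<bar>pmf q y\<bar>) summable_on A"
  using su2[of 1 p q A] by simp

lemma pp_bound:
  fixes u w N1 N2 D :: "'x \<Rightarrow> real"
  assumes d: "0 \<le> d" and lo: "\<And>y. d * N2 y \<le> D y" and up: "\<And>y. D y \<le> d * N1 y"
    and N1: "\<And>y. 0 \<le> N1 y \<and> N1 y \<le> 1" and N2: "\<And>y. 0 \<le> N2 y \<and> N2 y \<le> 1"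
    and su: "(\<lambda>y. \<bar>u y\<bar> + \<bar>w y\<bar>) summable_on UNIV"
  shows "infsum (\<lambda>y. (u y - w y) * D y) UNIV
       \<le> d * infsum (\<lambda>y. pos_part (u y - w y) * N1 y - pos_part (w y - u y) * N2 y) UNIV"
proof -
  have Db: "\<bar>D y\<bar> \<le> d" for y
  proof -
    have "0 \<le> d * N2 y" using d N2[of y] by simp
    moreover have "d * N1 y \<le> d" using d N1[of y] by (simp add: mult_left_le)
    ultimately show ?thesis using lo[of y] up[of y] by linarith
  qed
  have s1: "(\<lambda>y. (u y - w y) * D y) summable_on UNIV"
  proof (rule summ_dom[OF summable_on_cmult_left[OF su, of d]])
    fix y
    have "\<bar>u y - w y\<bar> * \<bar>D y\<bar> \<le> (\<bar>u y\<bar> + \<bar>w y\<bar>) * d"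
      by (rule mult_mono[OF abs_triangle_ineq4 Db]) auto
    then show "\<bar>(u y - w y) * D y\<bar> \<le> (\<bar>u y\<bar> + \<bar>w y\<bar>) * d" by (simp add: abs_mult)
  qed
  have s2: "(\<lambda>y. pos_part (u y - w y) * N1 y - pos_part (w y - u y) * N2 y) summable_on UNIV"
  proof (rule summ_dom[OF su])
    fix y
    have p: "0 \<le> pos_part (u y - w y)" "0 \<le> pos_part (w y - u y)" by (auto simp: pos_part_def)
    have a: "0 \<le> pos_part (u y - w y) * N1 y" "pos_part (u y - w y) * N1 y \<le> pos_part (u y - w y)"
      using p N1[of y] by (auto intro: mult_left_le)
    have b: "0 \<le> pos_part (w y - u y) * N2 y" "pos_part (w y - u y) * N2 y \<le> pos_part (w y - u y)"
      using p N2[of y] by (auto intro: mult_left_le)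
    have c: "pos_part (u y - w y) + pos_part (w y - u y) \<le> \<bar>u y\<bar> + \<bar>w y\<bar>"
      by (auto simp: pos_part_def max_def abs_if)
    show "\<bar>pos_part (u y - w y) * N1 y - pos_part (w y - u y) * N2 y\<bar> \<le> \<bar>u y\<bar> + \<bar>w y\<bar>"
      unfolding abs_le_iff using a b c p by linarith
  qed
  have "infsum (\<lambda>y. (u y - w y) * D y) UNIV
      \<le> infsum (\<lambda>y. d * (pos_part (u y - w y) * N1 y - pos_part (w y - u y) * N2 y)) UNIV"
  proof (rule infsum_mono[OF s1 summable_on_cmult_right[OF s2]])
    fix y
    show "(u y - w y) * D y \<le> d * (pos_part (u y - w y) * N1 y - pos_part (w y - u y) * N2 y)"
    proof (cases "0 \<le> u y - w y")
      case True
      have "(u y - w y) * D y \<le> (u y - w y) * (d * N1 y)" by (rule mult_left_mono[OF up True])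
      then show ?thesis using True by (simp add: pos_part_def max_def algebra_simps)
    next
      case False
      have "(u y - w y) * D y \<le> (u y - w y) * (d * N2 y)"
        by (rule mult_left_mono_neg[OF lo]) (use False in simp)
      then show ?thesis using False by (simp add: pos_part_def max_def algebra_simps)
    qed
  qed
  also have "\<dots> = d * infsum (\<lambda>y. pos_part (u y - w y) * N1 y - pos_part (w y - u y) * N2 y) UNIV"
    by (rule infsum_cmult_right')
  finally show ?thesis .
qed

context rb begin

abbreviation VL where "VL lam \<equiv> Vlam \<beta> P c lam"
abbreviation HH where "HH lam x a \<equiv> Hq \<beta> P c lam (VL lam) x a"
definition pol where "pol lam x = (\<not> HH lam x False < HH lam x True)"

lemma bVL: "bnd (VL lam)" using Vl by blast

lemma VL_T: "VL lam x = min (HH lam x False) (HH lam x True)"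
  using Vl[of lam] unfolding T_def by metis

lemma V_pol: "VL lam x = HH lam x (pol lam x)"
proof (cases "HH lam x False < HH lam x True")
  case True then show ?thesis unfolding VL_T[of lam x] pol_def by simp
next
  case False
  then have "min (HH lam x False) (HH lam x True) = HH lam x True" by (simp add: min_absorb2)
  then show ?thesis unfolding VL_T[of lam x] pol_def using False by simp
qed

lemma V_le: "VL lam x \<le> HH lam x a"
  unfolding VL_T[of lam x] by (cases a) auto

lemma H_shift: "HH l2 x a = HH l1 x a + (1-\<beta>)*(l2-l1)* of_bool a + \<beta> * Ex (P a x) (\<lambda>y. VL l2 y - VL l1 y)"
  by (simp add: Hq_eq clam_def Ex_diff bVL algebra_simps)

lemma neg_arg:
  fixes F :: "'x \<Rightarrow> real"
  assumes "bnd F" "\<And>x. F x \<le> \<beta> * Ex (Q x) F"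
  shows "F x \<le> 0"
proof -
  obtain B where b: "\<And>y. \<bar>F y\<bar> \<le> B" using assms(1) by (meson bndE)
  have FB: "F y \<le> B * \<beta>^n" for n y
  proof (induction n arbitrary: y)
    case 0 show ?case using b[of y] by simp
  next
    case (Suc n)
    have "Ex (Q y) F \<le> B * \<beta>^n" by (rule Ex_le_const[OF assms(1) Suc.IH])
    then have "\<beta> * Ex (Q y) F \<le> \<beta> * (B * \<beta>^n)" using b0 by (simp add: mult_left_mono)
    then have "F y \<le> \<beta> * (B * \<beta>^n)" using assms(2)[of y] by linarith
    then show ?case by (simp add: mult_ac)
  qed
  show ?thesis by (rule geo_zero[of _ B \<beta>, OF FB]) (use b0 b1 in auto)
qed

lemma D_up: "VL l2 x - VL l1 x \<le> (1-\<beta>)*(l2-l1)* of_bool (pol l1 x) + \<beta> * Ex (P (pol l1 x) x) (\<lambda>y. VL l2 y - VL l1 y)"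
  using V_le[of l2 x "pol l1 x"] V_pol[of l1 x] H_shift[of l2 x "pol l1 x" l1]
  by linarith

lemma D_lo: "(1-\<beta>)*(l2-l1)* of_bool (pol l2 x) + \<beta> * Ex (P (pol l2 x) x) (\<lambda>y. VL l2 y - VL l1 y) \<le> VL l2 x - VL l1 x"
  using V_le[of l1 x "pol l2 x"] V_pol[of l2 x] H_shift[of l2 x "pol l2 x" l1]
  by linarith

lemma D_upper: "VL l2 y - VL l1 y \<le> (l2 - l1) * occ \<beta> P (pol l1) y"
proof -
  let ?g = "pol l1"
  let ?D = "\<lambda>y. VL l2 y - VL l1 y"
  let ?N = "\<lambda>y. (l2-l1) * occ \<beta> P ?g y"
  define F where "F = (\<lambda>y. ?D y - ?N y)"
  have bD: "bnd ?D" by (intro bnd_diff bVL)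
  have bN: "bnd ?N" by (intro bnd_cmult occ_bnd)
  have bF: "bnd F" unfolding F_def by (rule bnd_diff[OF bD bN])
  have "F x \<le> \<beta> * Ex (P (?g x) x) F" for x
  proof -
    have "F x \<le> (1-\<beta>)*(l2-l1)* of_bool (?g x) + \<beta> * Ex (P (?g x) x) ?D
               - (l2-l1) * ((1-\<beta>) * of_bool (?g x) + \<beta> * Ex (P (?g x) x) (occ \<beta> P ?g))"
      unfolding F_def using D_up[of l2 x l1] occ_rec[of ?g x] by simp
    also have "\<dots> = \<beta> * (Ex (P (?g x) x) ?D - (l2-l1) * Ex (P (?g x) x) (occ \<beta> P ?g))"
      by (simp add: algebra_simps)
    also have "\<dots> = \<beta> * (Ex (P (?g x) x) ?D - Ex (P (?g x) x) ?N)"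
      by (simp add: Ex_cmult)
    also have "\<dots> = \<beta> * Ex (P (?g x) x) F"
      unfolding F_def by (simp add: Ex_diff[OF bD bN])
    finally show ?thesis .
  qed
  then have "F y \<le> 0" by (rule neg_arg[OF bF])
  then show ?thesis unfolding F_def by simp
qed

lemma D_lower: "(l2 - l1) * occ \<beta> P (pol l2) y \<le> VL l2 y - VL l1 y"
proof -
  let ?g = "pol l2"
  let ?D = "\<lambda>y. VL l2 y - VL l1 y"
  let ?N = "\<lambda>y. (l2-l1) * occ \<beta> P ?g y"
  define F where "F = (\<lambda>y. ?N y - ?D y)"
  have bD: "bnd ?D" by (intro bnd_diff bVL)
  have bN: "bnd ?N" by (intro bnd_cmult occ_bnd)
  have bF: "bnd F" unfolding F_def by (rule bnd_diff[OF bN bD])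
  have "F x \<le> \<beta> * Ex (P (?g x) x) F" for x
  proof -
    have "F x \<le> (l2-l1) * ((1-\<beta>) * of_bool (?g x) + \<beta> * Ex (P (?g x) x) (occ \<beta> P ?g))
                - ((1-\<beta>)*(l2-l1)* of_bool (?g x) + \<beta> * Ex (P (?g x) x) ?D)"
      unfolding F_def using D_lo[of l2 l1 x] occ_rec[of ?g x] by simp
    also have "\<dots> = \<beta> * ((l2-l1) * Ex (P (?g x) x) (occ \<beta> P ?g) - Ex (P (?g x) x) ?D)"
      by (simp add: algebra_simps)
    also have "\<dots> = \<beta> * (Ex (P (?g x) x) ?N - Ex (P (?g x) x) ?D)"
      by (simp add: Ex_cmult)
    also have "\<dots> = \<beta> * Ex (P (?g x) x) F"
      unfolding F_def by (simp add: Ex_diff[OF bN bD])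
    finally show ?thesis .
  qed
  then have "F y \<le> 0" by (rule neg_arg[OF bF])
  then show ?thesis unfolding F_def by simp
qed

end

context rb begin

lemma setup_bounds:
  assumes lt: "l1 < l2"
  shows "\<forall>y. VL l2 y - VL l1 y \<le> (l2 - l1) * occ \<beta> P (pol l1) y"
    and "\<forall>y. (l2 - l1) * occ \<beta> P (pol l2) y \<le> VL l2 y - VL l1 y"
    and "\<forall>y. occ \<beta> P (pol l2) y \<le> occ \<beta> P (pol l1) y"
proof -
  show up: "\<forall>y. VL l2 y - VL l1 y \<le> (l2 - l1) * occ \<beta> P (pol l1) y" using D_upper by blast
  show lo: "\<forall>y. (l2 - l1) * occ \<beta> P (pol l2) y \<le> VL l2 y - VL l1 y" using D_lower by blast
  show "\<forall>y. occ \<beta> P (pol l2) y \<le> occ \<beta> P (pol l1) y"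
  proof
    fix y
    have "(l2 - l1) * occ \<beta> P (pol l2) y \<le> (l2 - l1) * occ \<beta> P (pol l1) y"
      using up lo by (meson order_trans)
    then show "occ \<beta> P (pol l2) y \<le> occ \<beta> P (pol l1) y" using lt by simp
  qed
qed

lemma mono_b:
  assumes lt: "l1 < l2"
  and cb: "\<forall>g h. (\<forall>x. occ \<beta> P g x \<ge> occ \<beta> P h x) \<longrightarrow>
          (\<forall>x. infsum (\<lambda>y. pos_part (pmf (P False x) y - pmf (P True x) y) * occ \<beta> P g y
                          - pos_part (pmf (P True x) y - pmf (P False x) y) * occ \<beta> P h y) UNIV
                 \<le> (1 - \<beta>) / \<beta>)"
  and px: "HH l1 x False < HH l1 x True"
  shows "HH l2 x False < HH l2 x True"
proof -
  define d where "d = l2 - l1"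
  define D where "D y = VL l2 y - VL l1 y" for y
  have d0: "0 < d" using lt d_def by simp
  note sb = setup_bounds[OF lt, folded d_def]
  have up: "D y \<le> d * occ \<beta> P (pol l1) y" for y using sb(1) unfolding D_def by blast
  have lo: "d * occ \<beta> P (pol l2) y \<le> D y" for y using sb(2) unfolding D_def by blast
  have S: "infsum (\<lambda>y. pos_part (pmf (P False x) y - pmf (P True x) y) * occ \<beta> P (pol l1) y
                      - pos_part (pmf (P True x) y - pmf (P False x) y) * occ \<beta> P (pol l2) y) UNIV
            \<le> (1 - \<beta>) / \<beta>" using cb sb(3) by blast
  have bD: "bnd D" unfolding D_def[abs_def] by (intro bnd_diff bVL)
  have "Ex (P False x) D - Ex (P True x) D = infsum (\<lambda>y. (pmf (P False x) y - pmf (P True x) y) * D y) UNIV"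
    unfolding Ex_def by (simp add: left_diff_distrib infsum_diff' bnd_summ bD)
  also have "\<dots> \<le> d * infsum (\<lambda>y. pos_part (pmf (P False x) y - pmf (P True x) y) * occ \<beta> P (pol l1) y
                      - pos_part (pmf (P True x) y - pmf (P False x) y) * occ \<beta> P (pol l2) y) UNIV"
    by (rule pp_bound[OF less_imp_le[OF d0] lo up occ_bd occ_bd su1])
  also have "\<dots> \<le> d * ((1 - \<beta>) / \<beta>)" by (rule mult_left_mono[OF S]) (use d0 in simp)
  finally have e1: "Ex (P False x) D - Ex (P True x) D \<le> d * ((1 - \<beta>) / \<beta>)" .
  have "\<beta> * (Ex (P False x) D - Ex (P True x) D) \<le> \<beta> * (d * ((1 - \<beta>) / \<beta>))"
    by (rule mult_left_mono[OF e1]) (use b0 in simp)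
  also have "\<dots> = (1-\<beta>) * d" using b0 by simp
  finally have e2: "\<beta> * Ex (P False x) D - \<beta> * Ex (P True x) D \<le> (1-\<beta>) * d"
    by (simp add: right_diff_distrib)
  have s1: "HH l2 x True = HH l1 x True + (1-\<beta>)*(l2-l1)* of_bool True + \<beta> * Ex (P True x) D"
    unfolding D_def by (rule H_shift)
  have s0: "HH l2 x False = HH l1 x False + (1-\<beta>)*(l2-l1)* of_bool False + \<beta> * Ex (P False x) D"
    unfolding D_def by (rule H_shift)
  show ?thesis using s1 s0 e2 px unfolding d_def by simp
qed

lemma mono_a:
  assumes lt: "l1 < l2"
  and ca: "\<forall>g h. (\<forall>x. occ \<beta> P g x \<ge> occ \<beta> P h x) \<longrightarrow>
          (\<forall>x z. infsum (\<lambda>y. pos_part (\<beta> * pmf (P True z) y - pmf (P True x) y) * occ \<beta> P g y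
                            - pos_part (pmf (P True x) y - \<beta> * pmf (P True z) y) * occ \<beta> P h y) UNIV
                 \<le> (1 - \<beta>)\<^sup>2 / \<beta>)"
  and px: "HH l1 x False < HH l1 x True"
  shows "HH l2 x False < HH l2 x True"
proof (rule ccontr)
  assume np: "\<not> HH l2 x False < HH l2 x True"
  define d where "d = l2 - l1"
  define D where "D y = VL l2 y - VL l1 y" for y
  have d0: "0 < d" using lt d_def by simp
  note sb = setup_bounds[OF lt, folded d_def]
  have up: "D y \<le> d * occ \<beta> P (pol l1) y" for y using sb(1) unfolding D_def by blast
  have lo: "d * occ \<beta> P (pol l2) y \<le> D y" for y using sb(2) unfolding D_def by blast
  have bD: "bnd D" unfolding D_def[abs_def] by (intro bnd_diff bVL)
  have Dnn: "0 \<le> D y" for y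
  proof -
    have "0 \<le> d * occ \<beta> P (pol l2) y" using d0 occ_bd[of "pol l2" y] by simp
    then show ?thesis using lo[of y] by linarith
  qed
  have ExD_nn: "0 \<le> Ex p D" for p by (rule Ex_ge_const[OF bD Dnn])
  define A where "A y = (1-\<beta>)*d + \<beta> * Ex (P True y) D" for y
  have A0: "0 \<le> A y" for y
    unfolding A_def by (intro add_nonneg_nonneg mult_nonneg_nonneg) (use b0 b1 d0 ExD_nn in auto)
  have key: "\<beta> * Ex (P True z) D - Ex (P True x) D \<le> d * ((1-\<beta>)\<^sup>2/\<beta>)" for z
  proof -
    have S: "infsum (\<lambda>y. pos_part (\<beta> * pmf (P True z) y - pmf (P True x) y) * occ \<beta> P (pol l1) y
                        - pos_part (pmf (P True x) y - \<beta> * pmf (P True z) y) * occ \<beta> P (pol l2) y) UNIV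
              \<le> (1 - \<beta>)\<^sup>2 / \<beta>" using ca sb(3) by blast
    have e1: "(\<lambda>y. (\<beta> * pmf (P True z) y - pmf (P True x) y) * D y)
            = (\<lambda>y. \<beta> * (pmf (P True z) y * D y) - pmf (P True x) y * D y)"
      by (auto simp: algebra_simps)
    have "\<beta> * Ex (P True z) D - Ex (P True x) D = infsum (\<lambda>y. (\<beta> * pmf (P True z) y - pmf (P True x) y) * D y) UNIV"
      unfolding e1 Ex_def
      by (subst infsum_diff'[OF summable_on_cmult_right[OF bnd_summ[OF bD]] bnd_summ[OF bD]])
         (simp add: infsum_cmult_right')
    also have "\<dots> \<le> d * infsum (\<lambda>y. pos_part (\<beta> * pmf (P True z) y - pmf (P True x) y) * occ \<beta> P (pol l1) y
                        - pos_part (pmf (P True x) y - \<beta> * pmf (P True z) y) * occ \<beta> P (pol l2) y) UNIV"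
      by (rule pp_bound[OF less_imp_le[OF d0] lo up occ_bd occ_bd su2])
    also have "\<dots> \<le> d * ((1-\<beta>)\<^sup>2/\<beta>)" by (rule mult_left_mono[OF S]) (use d0 in simp)
    finally show ?thesis .
  qed
  have Dup: "D y \<le> (1-\<beta>)*d* of_bool (pol l1 y) + \<beta> * Ex (P (pol l1 y) y) D" for y
    unfolding D_def d_def by (rule D_up)
  obtain B where B: "\<And>y. \<bar>D y\<bar> \<le> B" using bD by (meson bndE)
  have bdd: "bdd_above (range D)" by (rule bdd_aboveI2[of UNIV D B]) (use B abs_le_D1 in blast)
  define M where "M = (SUP y. D y)"
  have DM: "D y \<le> M" for y unfolding M_def by (rule cSUP_upper[OF _ bdd]) simp
  have ExM: "Ex p D \<le> M" for p by (rule Ex_le_const[OF bD DM])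
  have claim: "\<beta> * M \<le> A x"
  proof (rule ccontr)
    assume "\<not> \<beta> * M \<le> A x"
    then have lt2: "A x < \<beta> * M" by simp
    have M0: "0 < M"
    proof (rule ccontr)
      assume "\<not> 0 < M"
      then have "\<beta> * M \<le> 0" using b0 by (simp add: mult_nonneg_nonpos)
      then show False using lt2 A0[of x] by linarith
    qed
    define e where "e = min ((1-\<beta>)*M) (M - A x/\<beta>)"
    have "A x / \<beta> < M" using lt2 b0 by (simp add: pos_divide_less_eq mult.commute)
    then have e0: "0 < e" unfolding e_def using M0 b1 by simp
    have e1: "e \<le> (1-\<beta>)*M" "e \<le> M - A x/\<beta>" unfolding e_def by simp_all
    have "M - e < (SUP y. D y)" using e0 M_def by simp
    then obtain z where z: "M - e < D z" using less_cSUP_iff[of UNIV D "M - e"] bdd by auto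
    show False
    proof (cases "pol l1 z")
      case False
      have "D z \<le> \<beta> * Ex (P False z) D" using Dup[of z] False by simp
      also have "\<dots> \<le> \<beta> * M" using ExM b0 by (simp add: mult_left_mono)
      also have "\<dots> \<le> M - e" using e1(1) by (simp add: algebra_simps)
      finally show False using z by simp
    next
      case True
      have Dz: "D z \<le> A z" using Dup[of z] True unfolding A_def by simp
      have eq: "A x - \<beta> * A z = (1-\<beta>)*d*(1-\<beta>) - \<beta> * (\<beta> * Ex (P True z) D - Ex (P True x) D)"
        unfolding A_def by (simp add: algebra_simps)
      have "\<beta> * (\<beta> * Ex (P True z) D - Ex (P True x) D) \<le> \<beta> * (d * ((1-\<beta>)\<^sup>2/\<beta>))"
        by (rule mult_left_mono[OF key[of z]]) (use b0 in simp)
      also have "\<dots> = (1-\<beta>)*d*(1-\<beta>)" using b0 by (simp add: power2_eq_square)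
      finally have "\<beta> * A z \<le> A x" using eq by linarith
      moreover have "\<beta> * D z \<le> \<beta> * A z" using Dz b0 by (simp add: mult_left_mono)
      moreover have "\<beta> * (M - e) < \<beta> * D z" using z b0 by simp
      moreover have "A x \<le> \<beta> * (M - e)"
      proof -
        have "\<beta> * (A x / \<beta>) \<le> \<beta> * (M - e)" using e1(2) b0 by (intro mult_left_mono) auto
        then show ?thesis using b0 by simp
      qed
      ultimately show False by linarith
    qed
  qed
  have g1x: "pol l1 x = False" using px unfolding pol_def by simp
  have V1x: "VL l1 x = HH l1 x False" using V_pol[of l1 x] g1x by simp
  have V2x: "VL l2 x = HH l2 x True" using V_pol[of l2 x] np unfolding pol_def by simp
  have s1: "HH l2 x True = HH l1 x True + (1-\<beta>)*(l2-l1)* of_bool True + \<beta> * Ex (P True x) D"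
    unfolding D_def by (rule H_shift)
  have s0: "HH l2 x False = HH l1 x False + (1-\<beta>)*(l2-l1)* of_bool False + \<beta> * Ex (P False x) D"
    unfolding D_def by (rule H_shift)
  have "A x < D x" using s1 V1x V2x px unfolding D_def A_def d_def by simp
  moreover have "D x \<le> \<beta> * Ex (P False x) D"
    using V_le[of l2 x False] s0 V1x unfolding D_def by simp
  moreover have "\<beta> * Ex (P False x) D \<le> \<beta> * M" using ExM b0 by (simp add: mult_left_mono)
  ultimately show False using claim by linarith
qed

end

theorem theorem1:
  fixes \<beta> :: real
    and P :: "bool \<Rightarrow> 'x::countable \<Rightarrow> 'x pmf"
    and c :: "'x \<Rightarrow> bool \<Rightarrow> real"
  assumes beta: "0 < \<beta>" "\<beta> < 1"
    and cost_bounded: "bounded (range (\<lambda>(x, a). c x a))"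
    and conds:
      "(\<forall>g h. (\<forall>x. occ \<beta> P g x \<ge> occ \<beta> P h x) \<longrightarrow>
          (\<forall>x z. infsum (\<lambda>y. pos_part (\<beta> * pmf (P True z) y - pmf (P True x) y) * occ \<beta> P g y
                            - pos_part (pmf (P True x) y - \<beta> * pmf (P True z) y) * occ \<beta> P h y) UNIV
                 \<le> (1 - \<beta>)\<^sup>2 / \<beta>))
       \<or>
       (\<forall>g h. (\<forall>x. occ \<beta> P g x \<ge> occ \<beta> P h x) \<longrightarrow>
          (\<forall>x. infsum (\<lambda>y. pos_part (pmf (P False x) y - pmf (P True x) y) * occ \<beta> P g y
                          - pos_part (pmf (P True x) y - pmf (P False x) y) * occ \<beta> P h y) UNIV
                 \<le> (1 - \<beta>) / \<beta>))"
  shows "indexable \<beta> P c"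
proof -
  interpret rb \<beta> P c using beta cost_bounded by unfold_locales auto
  show ?thesis unfolding indexable_def
  proof (intro allI impI subsetI)
    fix l1 l2 x assume le: "l1 \<le> l2" and x: "x \<in> passive_set \<beta> P c l1"
    show "x \<in> passive_set \<beta> P c l2"
    proof (cases "l1 = l2")
      case True then show ?thesis using x by simp
    next
      case False
      then have lt: "l1 < l2" using le by simp
      have px: "HH l1 x False < HH l1 x True" using x unfolding passive_set_def by simp
      show ?thesis using conds mono_a[OF lt _ px] mono_b[OF lt _ px] unfolding passive_set_def by blast
    qed
  qed
qed

end
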